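(* There is a universally obviously strategy-proof randomized mechanism for unknown single-minded bidders in a multi-unit auction that gives a $400$-approximation to the optimal social welfare.
   Context: A multi-unit auction has $m$ identical items; bidder $i$'s valuation is $v_i:\{0,1,\dots,m\}\to\mathbb{R}_{\ge0}$ (value for a number of items). A valuation is single-minded if there are $x_i\ge0$ and $d_i\in\{1,\dots,m\}$ with $v_i(q)=x_i$ for $q\ge d_i$ and $v_i(q)=0$ otherwise; "unknown single-minded" means both $x_i$ and $d_i$ are private (the domain is all single-minded valuations). Utilities are quasi-linear. A deterministic mechanism is a rooted tree: each internal node is assigned to one bidder, who sends one of the messages labeling the outgoing edges; each leaf is labeled with a feasible allocation (quantities summing to at most $m$) and payments. A behavior $B_i$ specifies a message at every node of bidder $i$; a profile $B$ determines a root-to-leaf path $\mathrm{Path}(B)$ with allocation $f_i(B)$ and payment $p_i(B)$ for $i$. A strategy $\mathcal S_i$ maps each valuation in the domain to a behavior; it is obviously dominant if for every $v_i$, every node $u$ of $i$, every $B_{-i}$ and every profile $B'$ with $u\in\mathrm{Path}(\mathcal S_i(v_i),B_{-i})\cap\mathrm{Path}(B')$ and $B'_i$ sending at $u$ a message different from $\mathcal S_i(v_i)$'s, $v_i(f_i(\mathcal S_i(v_i),B_{-i}))-p_i(\mathcal S_i(v_i),B_{-i})\ge v_i(f_i(B'))-p_i(B')$. A randomized mechanism (a distribution over deterministic mechanisms with strategies) is universally OSP if each mechanism in its support is OSP; it gives an $\alpha$-approximation if for every profile $\mathrm{OPT}\le\alpha\,\mathbb{E}[\text{welfare}]$ when bidders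 follow their strategies, $\mathrm{OPT}$ being the maximum of $\sum_iv_i(q_i)$ over $q_i\ge0$ integers with $\sum_iq_i\le m$. *)

theory Defs
  imports "HOL-Probability.Probability_Mass_Function" "HOL-Library.Sublist"
begin

(* Bidders are 0,...,n-1; items: m identical units. *)

type_synonym valuation = "nat \<Rightarrow> real"

definition single_minded :: "nat \<Rightarrow> valuation \<Rightarrow> bool" where
  "single_minded m v \<longleftrightarrow>
     (\<exists>x d. x \<ge> 0 \<and> 1 \<le> d \<and> d \<le> m \<and> (\<forall>q. v q = (if d \<le> q then x else 0)))"

(* A leaf carries an allocation and payments;
   an internal node is assigned to a bidder, has a set of admissible messages labelling
   its outgoing edges, and a child for each message. Trees may be infinitely branching
   but every root-to-leaf path is finite. *)
datatype 'm mech = Leaf "nat \<Rightarrow> nat" "nat \<Rightarrow> real" | Node nat "'m set" "'m \<Rightarrow> 'm mech"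

type_synonym msg = "real list"

(* nodes are identified by the history of messages leading to them from the root *)
fun subtree :: "'m mech \<Rightarrow> 'm list \<Rightarrow> 'm mech option" where
  "subtree T [] = Some T"
| "subtree (Leaf a p) (x # xs) = None"
| "subtree (Node i M ch) (x # xs) = (if x \<in> M then subtree (ch x) xs else None)"

type_synonym 'm behavior = "'m list \<Rightarrow> 'm"
type_synonym 'm profile = "nat \<Rightarrow> 'm behavior"
type_synonym 'm strategy = "valuation \<Rightarrow> 'm behavior"

primrec run :: "'m mech \<Rightarrow> 'm list \<Rightarrow> 'm profile \<Rightarrow> 'm list \<times> (nat \<Rightarrow> nat) \<times> (nat \<Rightarrow> real)" where
  "run (Leaf a p) h B = (h, a, p)"
| "run (Node i M ch) h B = run (ch (B i h)) (h @ [B i h]) B"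

definition alloc :: "'m mech \<Rightarrow> 'm profile \<Rightarrow> nat \<Rightarrow> nat" where
  "alloc T B = fst (snd (run T [] B))"

definition pay :: "'m mech \<Rightarrow> 'm profile \<Rightarrow> nat \<Rightarrow> real" where
  "pay T B = snd (snd (run T [] B))"

definition on_path :: "'m mech \<Rightarrow> 'm list \<Rightarrow> 'm profile \<Rightarrow> bool" where
  "on_path T h B \<longleftrightarrow> prefix h (fst (run T [] B))"

definition valid_behavior :: "'m mech \<Rightarrow> nat \<Rightarrow> 'm behavior \<Rightarrow> bool" where
  "valid_behavior T i b \<longleftrightarrow> (\<forall>h M ch. subtree T h = Some (Node i M ch) \<longrightarrow> b h \<in> M)"

definition well_formed :: "nat \<Rightarrow> nat \<Rightarrow> 'm mech \<Rightarrow> bool" where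
  "well_formed n m T \<longleftrightarrow>
     (\<forall>h i M ch. subtree T h = Some (Node i M ch) \<longrightarrow> i < n \<and> M \<noteq> {}) \<and>
     (\<forall>h a p. subtree T h = Some (Leaf a p) \<longrightarrow> (\<Sum>i<n. a i) \<le> m)"

definition det_mech :: "nat \<Rightarrow> nat \<Rightarrow> 'm mech \<Rightarrow> (nat \<Rightarrow> 'm strategy) \<Rightarrow> bool" where
  "det_mech n m T S \<longleftrightarrow> well_formed n m T \<and>
     (\<forall>i<n. \<forall>v. single_minded m v \<longrightarrow> valid_behavior T i (S i v))"

definition utility :: "valuation \<Rightarrow> 'm mech \<Rightarrow> 'm profile \<Rightarrow> nat \<Rightarrow> real" where
  "utility v T B i = v (alloc T B i) - pay T B i"

definition OSP :: "nat \<Rightarrow> nat \<Rightarrow> 'm mech \<Rightarrow> (nat \<Rightarrow> 'm strategy) \<Rightarrow> bool" where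
  "OSP n m T S \<longleftrightarrow>
     (\<forall>i<n. \<forall>v. single_minded m v \<longrightarrow>
        (\<forall>h M ch B B'. subtree T h = Some (Node i M ch) \<longrightarrow>
           (\<forall>j. valid_behavior T j (B j)) \<longrightarrow> (\<forall>j. valid_behavior T j (B' j)) \<longrightarrow>
           on_path T h (B(i := S i v)) \<longrightarrow> on_path T h B' \<longrightarrow>
           B' i h \<noteq> S i v h \<longrightarrow>
           utility v T B' i \<le> utility v T (B(i := S i v)) i))"

definition welfare :: "nat \<Rightarrow> 'm mech \<Rightarrow> (nat \<Rightarrow> 'm strategy) \<Rightarrow> (nat \<Rightarrow> valuation) \<Rightarrow> real" where
  "welfare n T S vs = (\<Sum>i<n. vs i (alloc T (\<lambda>j. S j (vs j)) i))"

definition opt_welfare :: "nat \<Rightarrow> nat \<Rightarrow> (nat \<Rightarrow> valuation) \<Rightarrow> real" where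
  "opt_welfare n m vs = Sup {(\<Sum>i<n. vs i (q i)) | q :: nat \<Rightarrow> nat. (\<Sum>i<n. q i) \<le> m}"

end

theory Submission
  imports Defs "HOL-Probability.Product_PMF"
begin

fun mkT :: "nat list \<Rightarrow> (nat \<Rightarrow> msg) \<Rightarrow> ((nat \<Rightarrow> msg) \<Rightarrow> (nat \<Rightarrow> nat) \<times> (nat \<Rightarrow> real)) \<Rightarrow> msg mech" where
  "mkT [] acc out = Leaf (fst (out acc)) (snd (out acc))"
| "mkT (i # rest) acc out = Node i UNIV (\<lambda>a. mkT rest (acc(i := a)) out)"

lemma run_mkT:
  assumes "distinct ord"
  shows "\<exists>P A. run (mkT ord acc out) h0 B = (h0 @ P, fst (out A), snd (out A)) \<and> length P = length ord \<and>
     (\<forall>j<length ord. P!j = B (ord!j) (h0 @ take j P) \<and> A (ord!j) = P!j) \<and> (\<forall>z. z \<notin> set ord \<longrightarrow> A z = acc z)"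
  using assms
proof (induction ord arbitrary: h0 acc)
  case Nil
  then show ?case by (intro exI[of _ "[]"] exI[of _ acc]) auto
next
  case (Cons i rest)
  define a where "a = B i h0"
  have dr: "distinct rest" using Cons.prems by simp
  obtain P A where PA0: "run (mkT rest (acc(i := a)) out) (h0 @ [a]) B = ((h0 @ [a]) @ P, fst (out A), snd (out A)) \<and>
    length P = length rest \<and> (\<forall>j<length rest. P!j = B (rest!j) ((h0 @ [a]) @ take j P) \<and> A (rest!j) = P!j) \<and>
    (\<forall>z. z \<notin> set rest \<longrightarrow> A z = (acc(i := a)) z)"
    using Cons.IH[OF dr, of "acc(i := a)" "h0 @ [a]"] by blast
  note PA = conjunct1[OF PA0] conjunct1[OF conjunct2[OF PA0]] conjunct1[OF conjunct2[OF conjunct2[OF PA0]]]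
     conjunct2[OF conjunct2[OF conjunct2[OF PA0]]]
  show ?case
  proof (intro exI[of _ "a # P"] exI[of _ A] conjI allI impI)
    show "run (mkT (i # rest) acc out) h0 B = (h0 @ a # P, fst (out A), snd (out A))"
      using PA(1) by (simp add: a_def)
    show "length (a # P) = length (i # rest)" using PA(2) by simp
    fix j assume j: "j < length (i # rest)"
    show "(a # P) ! j = B ((i # rest) ! j) (h0 @ take j (a # P))"
    proof (cases j)
      case 0 then show ?thesis by (simp add: a_def)
    next
      case (Suc j') then show ?thesis using PA(3) j by simp
    qed
    show "A ((i # rest) ! j) = (a # P) ! j"
    proof (cases j)
      case 0 then show ?thesis using PA(4) Cons.prems by simp
    next
      case (Suc j') then show ?thesis using PA(3) j by simp
    qed
  next
    fix z assume "z \<notin> set (i # rest)"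
    then show "A z = acc z" using PA(4) by simp
  qed
qed

lemma subtree_mkT:
  "subtree (mkT ord acc out) h = Some t \<Longrightarrow> length h \<le> length ord \<and> (\<exists>acc'. t = mkT (drop (length h) ord) acc' out)"
proof (induction h arbitrary: ord acc)
  case Nil
  then show ?case by auto
next
  case (Cons x xs)
  then show ?case
  proof (cases ord)
    case Nil
    then show ?thesis using Cons.prems by simp
  next
    case (Cons i rest)
    with Cons.prems have "subtree (mkT rest (acc(i := x)) out) xs = Some t" by simp
    from Cons.IH[OF this] Cons show ?thesis by auto
  qed
qed

lemma mkT_Node: "mkT ord acc out = Node i M ch \<Longrightarrow> ord \<noteq> [] \<and> i = hd ord \<and> M = UNIV"
  by (cases ord) auto

lemma mkT_Leaf: "mkT ord acc out = Leaf a p \<Longrightarrow> a = fst (out acc) \<and> p = snd (out acc)"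
  by (cases ord) auto

lemma subtree_mkT_Node:
  assumes "subtree (mkT ord acc out) h = Some (Node i M ch)"
  shows "length h < length ord \<and> i = ord ! length h \<and> M = UNIV"
proof -
  from subtree_mkT[OF assms] obtain acc' where "length h \<le> length ord" "Node i M ch = mkT (drop (length h) ord) acc' out"
    by auto
  with mkT_Node[of "drop (length h) ord" acc' out i M ch] show ?thesis
    by (auto simp: hd_drop_conv_nth)
qed

lemma subtree_mkT_Leaf:
  assumes "subtree (mkT ord acc out) h = Some (Leaf a p)"
  shows "\<exists>acc'. a = fst (out acc') \<and> p = snd (out acc')"
proof -
  from subtree_mkT[OF assms] obtain acc' where "Leaf a p = mkT (drop (length h) ord) acc' out"
    by auto
  with mkT_Leaf[of "drop (length h) ord" acc' out a p] show ?thesis by metis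
qed

lemma valid_mkT: "valid_behavior (mkT ord acc out) i b"
  unfolding valid_behavior_def using subtree_mkT_Node by blast

lemma det_mech_mkT:
  assumes "set ord \<subseteq> {..<n}" "\<And>acc. (\<Sum>i<n. fst (out acc) i) \<le> m"
  shows "det_mech n m (mkT ord acc0 out) S"
proof -
  have 1: "i < n \<and> M \<noteq> {}" if "subtree (mkT ord acc0 out) h = Some (Node i M ch)" for h i M ch
    using subtree_mkT_Node[OF that] assms(1) by (auto simp: subset_iff)
  have 2: "(\<Sum>i<n. a i) \<le> m" if "subtree (mkT ord acc0 out) h = Some (Leaf a p)" for h a p
    using subtree_mkT_Leaf[OF that] assms(2) by auto
  show ?thesis unfolding det_mech_def well_formed_def using 1 2 valid_mkT by blast
qed

lemma OSP_mkT:
  assumes dist: "distinct ord"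
    and dep: "\<And>k acc acc'. k < length ord \<Longrightarrow> (\<And>j. j \<le> k \<Longrightarrow> acc (ord!j) = acc' (ord!j)) \<Longrightarrow>
        fst (out acc) (ord!k) = fst (out acc') (ord!k) \<and> snd (out acc) (ord!k) = snd (out acc') (ord!k)"
    and ic: "\<And>i v acc a. i \<in> set ord \<Longrightarrow> single_minded m v \<Longrightarrow>
        v (fst (out (acc(i:=a))) i) - snd (out (acc(i:=a))) i \<le> v (fst (out (acc(i:=e v))) i) - snd (out (acc(i:=e v))) i"
  shows "OSP n m (mkT ord acc0 out) (\<lambda>i v h. e v)"
  unfolding OSP_def
proof (intro allI impI)
  fix i v h M ch B B'
  assume i: "i < n" and v: "single_minded m v" and sub: "subtree (mkT ord acc0 out) h = Some (Node i M ch)"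
    and p1: "on_path (mkT ord acc0 out) h (B(i := (\<lambda>h. e v)))" and p2: "on_path (mkT ord acc0 out) h B'"
  let ?T = "mkT ord acc0 out"
  let ?B1 = "B(i := (\<lambda>h. e v))"
  define k where "k = length h"
  from subtree_mkT_Node[OF sub] have k: "k < length ord" "i = ord ! k" by (auto simp: k_def)
  obtain P1 A1 where R1: "run ?T [] ?B1 = ([] @ P1, fst (out A1), snd (out A1))" "length P1 = length ord"
    "\<forall>j<length ord. P1!j = ?B1 (ord!j) ([] @ take j P1) \<and> A1 (ord!j) = P1!j"
    using run_mkT[OF dist, of acc0 out "[]" ?B1] by blast
  obtain P2 A2 where R2: "run ?T [] B' = ([] @ P2, fst (out A2), snd (out A2))" "length P2 = length ord"
    "\<forall>j<length ord. P2!j = B' (ord!j) ([] @ take j P2) \<and> A2 (ord!j) = P2!j"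
    using run_mkT[OF dist, of acc0 out "[]" B'] by blast
  from p1 R1(1) have h1: "h = take k P1" unfolding on_path_def k_def by (auto simp: prefix_def)
  from p2 R2(1) have h2: "h = take k P2" unfolding on_path_def k_def by (auto simp: prefix_def)
  have agree: "A1 (ord!j) = A2 (ord!j)" if "j < k" for j
  proof -
    have "P1 ! j = h ! j" using h1 that by simp
    moreover have "P2 ! j = h ! j" using h2 that by simp
    ultimately show ?thesis using R1(3) R2(3) that k(1) by auto
  qed
  have A1i: "A1 i = e v" using R1(3) k by simp
  have A2i: "A2 i = B' i h" using R2(3) k h2 by simp
  define acc'' where "acc'' = A1(i := A2 i)"
  have "fst (out acc'') (ord!k) = fst (out A2) (ord!k) \<and> snd (out acc'') (ord!k) = snd (out A2) (ord!k)"
  proof (rule dep[OF k(1)])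
    fix j assume "j \<le> k"
    show "acc'' (ord ! j) = A2 (ord ! j)"
    proof (cases "j = k")
      case True then show ?thesis using k by (simp add: acc''_def)
    next
      case False
      with \<open>j \<le> k\<close> have "j < k" by simp
      moreover have "ord ! j \<noteq> i" using k dist \<open>j < k\<close> by (simp add: nth_eq_iff_index_eq)
      ultimately show ?thesis using agree by (simp add: acc''_def)
    qed
  qed
  then have eq2: "fst (out A2) i = fst (out (A1(i := A2 i))) i" "snd (out A2) i = snd (out (A1(i := A2 i))) i"
    using k by (auto simp: acc''_def)
  have "A1(i := e v) = A1" using A1i by auto
  moreover have "i \<in> set ord" using k by simp
  note ic' = ic[OF this v, of A1 "A2 i"]
  ultimately have "v (fst (out A2) i) - snd (out A2) i \<le> v (fst (out A1) i) - snd (out A1) i"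
    using eq2 by simp
  then show "utility v ?T B' i \<le> utility v ?T ?B1 i"
    unfolding utility_def alloc_def pay_def using R1(1) R2(1) by simp
qed

definition sd :: "nat \<Rightarrow> valuation \<Rightarrow> nat" where
  "sd m v = (LEAST q. 1 \<le> q \<and> v q = v m)"

definition enc :: "nat \<Rightarrow> valuation \<Rightarrow> msg" where
  "enc m v = [v m, real (sd m v)]"

definition rx :: "msg \<Rightarrow> real" where "rx a = max 0 (a ! 0)"
definition rd :: "msg \<Rightarrow> nat" where "rd a = nat \<lceil>a ! 1\<rceil>"

lemma sm_canon:
  assumes "single_minded m v"
  shows "0 \<le> v m \<and> 1 \<le> sd m v \<and> sd m v \<le> m \<and> (\<forall>q. v q = (if sd m v \<le> q then v m else 0))"
proof -
  from assms obtain x d where xd: "x \<ge> 0" "1 \<le> d" "d \<le> m" "\<forall>q. v q = (if d \<le> q then x else 0)"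
    unfolding single_minded_def by blast
  have vm: "v m = x" using xd by simp
  show ?thesis
  proof (cases "x = 0")
    case True
    have "sd m v = 1" unfolding sd_def using xd True
      by (intro Least_equality) auto
    then show ?thesis using xd True vm by auto
  next
    case False
    have "sd m v = d" unfolding sd_def using xd False vm
      by (intro Least_equality) (auto split: if_splits)
    then show ?thesis using xd vm by auto
  qed
qed

lemma rx_enc: "single_minded m v \<Longrightarrow> rx (enc m v) = v m"
  using conjunct1[OF sm_canon[of m v]] by (simp add: rx_def enc_def)

lemma rd_enc: "rd (enc m v) = sd m v"
  by (simp add: rd_def enc_def)

lemma sm_zero: "single_minded m v \<Longrightarrow> v 0 = 0"
proof -
  assume a: "single_minded m v"
  have "v 0 = (if sd m v \<le> 0 then v m else 0)" using sm_canon[OF a] by blast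
  then show ?thesis using sm_canon[OF a] by simp
qed

lemma sm_val: "single_minded m v \<Longrightarrow> v q = (if sd m v \<le> q then v m else 0)"
  using sm_canon[of m v] by blast

lemma sm_nonneg: "single_minded m v \<Longrightarrow> 0 \<le> v q"
  using sm_val[of m v q] conjunct1[OF sm_canon[of m v]] by simp

definition ordc :: "nat \<Rightarrow> (nat \<Rightarrow> bool) \<Rightarrow> nat list" where
  "ordc n c = filter c [0..<n] @ filter (\<lambda>i. \<not> c i) [0..<n]"

lemma ordc_distinct: "distinct (ordc n c)"
  unfolding ordc_def by auto

lemma ordc_set: "set (ordc n c) = {..<n}"
  unfolding ordc_def by auto

lemma ordc_length: "length (ordc n c) = n"
proof -
  have "length (ordc n c) = card (set (ordc n c))"
    using ordc_distinct distinct_card by metis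
  then show ?thesis using ordc_set by simp
qed

lemma sorted_nth_le:
  assumes "sorted_wrt (<) (L::nat list)" "p < length L" "q < length L" "L ! p \<le> L ! q"
  shows "p \<le> q"
proof (rule ccontr)
  assume "\<not> p \<le> q"
  then have "q < p" by simp
  with assms have "L ! q < L ! p" by (simp add: sorted_wrt_iff_nth_less)
  with assms(4) show False by simp
qed

lemma ordc_pred:
  assumes k: "k < n" and i: "i = ordc n c ! k" and ci: "\<not> c i" and j: "j < n" and cj: "c j \<or> j \<le> i"
  shows "\<exists>j'\<le>k. ordc n c ! j' = j"
proof -
  define L1 where "L1 = filter c [0..<n]"
  define L2 where "L2 = filter (\<lambda>i. \<not> c i) [0..<n]"
  have o: "ordc n c = L1 @ L2" by (simp add: ordc_def L1_def L2_def)
  have len: "length L1 + length L2 = n" using ordc_length[of n c] o by simp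
  have kge: "length L1 \<le> k"
  proof (rule ccontr)
    assume "\<not> length L1 \<le> k"
    then have "i = L1 ! k" using i o by (simp add: nth_append)
    then have "i \<in> set L1" using \<open>\<not> length L1 \<le> k\<close> by simp
    then show False using ci by (simp add: L1_def)
  qed
  define k2 where "k2 = k - length L1"
  have k2: "k2 < length L2" "i = L2 ! k2" using kge k len i o by (auto simp: k2_def nth_append)
  show ?thesis
  proof (cases "c j")
    case True
    then have "j \<in> set L1" using j by (simp add: L1_def)
    then obtain p where p: "p < length L1" "L1 ! p = j" by (meson in_set_conv_nth)
    then have "p \<le> k" using kge by simp
    moreover have "ordc n c ! p = j" using p o by (simp add: nth_append)
    ultimately show ?thesis by blast
  next
    case False
    then have "j \<in> set L2" "j \<le> i" using j cj by (auto simp: L2_def)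
    then obtain p where p: "p < length L2" "L2 ! p = j" by (meson in_set_conv_nth)
    have sw: "sorted_wrt (<) L2" unfolding L2_def by (intro sorted_wrt_filter) simp
    have "p \<le> k2" using sorted_nth_le[OF sw p(1) k2(1)] p k2 \<open>j \<le> i\<close> by simp
    then have "length L1 + p \<le> k" using kge by (simp add: k2_def)
    moreover have "ordc n c ! (length L1 + p) = j" using p o by (simp add: nth_append)
    ultimately show ?thesis by blast
  qed
qed

lemma dep_ordc:
  assumes "\<And>i acc acc'. i < n \<Longrightarrow> \<not> c i \<Longrightarrow> (\<And>j. j < n \<Longrightarrow> c j \<or> j \<le> i \<Longrightarrow> acc j = acc' j) \<Longrightarrow>
        fst (out acc) i = fst (out acc') i \<and> snd (out acc) i = snd (out acc') i"
    and "\<And>i acc acc'. i < n \<Longrightarrow> c i \<Longrightarrow> fst (out acc) i = fst (out acc') i \<and> snd (out acc) i = snd (out acc') i"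
    and k: "k < length (ordc n c)"
    and ag: "\<And>j. j \<le> k \<Longrightarrow> acc (ordc n c ! j) = acc' (ordc n c ! j)"
  shows "fst (out acc) (ordc n c ! k) = fst (out acc') (ordc n c ! k) \<and> snd (out acc) (ordc n c ! k) = snd (out acc') (ordc n c ! k)"
proof -
  define i where "i = ordc n c ! k"
  have kn: "k < n" using k ordc_length by metis
  have "i \<in> set (ordc n c)" using k by (simp add: i_def)
  then have "i < n" using ordc_set by auto
  show ?thesis
  proof (cases "c i")
    case True then show ?thesis using assms(2) \<open>i < n\<close> i_def by blast
  next
    case False
    have "acc j = acc' j" if jn: "j < n" and cj: "c j \<or> j \<le> i" for j
    proof -
      obtain j' where "j' \<le> k" "ordc n c ! j' = j" using ordc_pred[OF kn i_def False jn cj] by blast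
      then show ?thesis using ag by metis
    qed
    then show ?thesis using assms(1)[OF \<open>i < n\<close> False] i_def by blast
  qed
qed

definition lexl :: "real \<Rightarrow> nat \<Rightarrow> real \<Rightarrow> nat \<Rightarrow> bool" where
  "lexl a i b j \<longleftrightarrow> a < b \<or> (a = b \<and> i < j)"

definition beats1 :: "nat \<Rightarrow> (nat \<Rightarrow> bool) \<Rightarrow> (nat \<Rightarrow> msg) \<Rightarrow> nat \<Rightarrow> bool" where
  "beats1 n c acc i \<longleftrightarrow> (\<forall>s<n. c s \<longrightarrow> lexl (rx (acc s)) s (rx (acc i)) i)"

definition win1 :: "nat \<Rightarrow> (nat \<Rightarrow> bool) \<Rightarrow> (nat \<Rightarrow> msg) \<Rightarrow> nat \<Rightarrow> bool" where
  "win1 n c acc i \<longleftrightarrow> i < n \<and> \<not> c i \<and> beats1 n c acc i \<and> (\<forall>j<i. \<not> c j \<longrightarrow> \<not> beats1 n c acc j)"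

definition price1 :: "nat \<Rightarrow> (nat \<Rightarrow> bool) \<Rightarrow> (nat \<Rightarrow> msg) \<Rightarrow> real" where
  "price1 n c acc = Max (insert 0 ((\<lambda>s. rx (acc s)) ` {s. s < n \<and> c s}))"

definition out1 :: "nat \<Rightarrow> nat \<Rightarrow> (nat \<Rightarrow> bool) \<Rightarrow> (nat \<Rightarrow> msg) \<Rightarrow> (nat \<Rightarrow> nat) \<times> (nat \<Rightarrow> real)" where
  "out1 n m c acc = ((\<lambda>i. if win1 n c acc i then m else 0), (\<lambda>i. if win1 n c acc i then price1 n c acc else 0))"

lemma win1_unique:
  assumes wi: "win1 n c acc i" and wj: "win1 n c acc j" shows "i = j"
proof (rule ccontr)
  assume "i \<noteq> j"
  then consider "i < j" | "j < i" by linarith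
  then show False
  proof cases
    case 1
    with wi wj show False unfolding win1_def by blast
  next
    case 2
    with wi wj show False unfolding win1_def by blast
  qed
qed

lemma out1_feasible: "(\<Sum>i<n. fst (out1 n m c acc) i) \<le> m"
proof (cases "\<exists>w. win1 n c acc w")
  case True
  then obtain w where w: "win1 n c acc w" by blast
  then have wn: "w < n" by (simp add: win1_def)
  have e: "fst (out1 n m c acc) i = (if i = w then m else 0)" for i
  proof (cases "i = w")
    case True then show ?thesis using w by (simp add: out1_def)
  next
    case False then have "\<not> win1 n c acc i" using win1_unique[OF w] by blast
    then show ?thesis using False by (simp add: out1_def)
  qed
  have "(\<Sum>i<n. fst (out1 n m c acc) i) = (\<Sum>i<n. if i = w then m else 0)"
    using e by simp
  also have "\<dots> = m" using wn by simp
  finally show ?thesis by simp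
next
  case False
  then show ?thesis by (simp add: out1_def)
qed

lemma out1_dep:
  assumes "i < n" "\<not> c i" "\<And>j. j < n \<Longrightarrow> c j \<or> j \<le> i \<Longrightarrow> acc j = acc' j"
  shows "fst (out1 n m c acc) i = fst (out1 n m c acc') i \<and> snd (out1 n m c acc) i = snd (out1 n m c acc') i"
proof -
  have bj: "beats1 n c acc j = beats1 n c acc' j" if "j \<le> i" for j
    unfolding beats1_def using assms that by auto
  have "win1 n c acc i = win1 n c acc' i"
    unfolding win1_def using bj by auto
  moreover have "price1 n c acc = price1 n c acc'"
    unfolding price1_def using assms by (intro arg_cong[where f=Max] arg_cong[where f="insert 0"] image_cong) auto
  ultimately show ?thesis by (simp add: out1_def)
qed

lemma out1_dep_sample:
  assumes "c i"
  shows "fst (out1 n m c acc) i = fst (out1 n m c acc') i \<and> snd (out1 n m c acc) i = snd (out1 n m c acc') i"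
  using assms by (simp add: out1_def win1_def)

lemma out1_ic:
  assumes v: "single_minded m v"
  shows "v (fst (out1 n m c (acc(i:=a))) i) - snd (out1 n m c (acc(i:=a))) i
       \<le> v (fst (out1 n m c (acc(i:=enc m v))) i) - snd (out1 n m c (acc(i:=enc m v))) i"
proof (cases "i < n \<and> \<not> c i")
  case False
  then show ?thesis by (auto simp: out1_def win1_def)
next
  case True
  define A where "A = acc(i:=a)"
  define E where "E = acc(i:=enc m v)"
  have v0: "v 0 = 0" using sm_zero[OF v] .
  have x0: "0 \<le> v m" using sm_nonneg[OF v] .
  have rxE: "rx (E i) = v m" using rx_enc[OF v] by (simp add: E_def)
  have bj: "beats1 n c A j = beats1 n c E j" if "j \<noteq> i" for j
    unfolding beats1_def A_def E_def using True that by auto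
  have pr: "price1 n c A = price1 n c E"
    unfolding price1_def A_def E_def using True
    by (intro arg_cong[where f=Max] arg_cong[where f="insert 0"] image_cong) auto
  define P where "P = price1 n c E"
  define Oth where "Oth = (\<forall>j<i. \<not> c j \<longrightarrow> \<not> beats1 n c E j)"
  have wA: "win1 n c A i = (Oth \<and> beats1 n c A i)"
    unfolding win1_def Oth_def using True bj by auto
  have wE: "win1 n c E i = (Oth \<and> beats1 n c E i)"
    unfolding win1_def Oth_def using True by auto
  have fin: "finite ((\<lambda>s. rx (E s)) ` {s. s < n \<and> c s})" by simp
  have b1: "P \<le> v m" if "beats1 n c E i"
  proof -
    have "rx (E s) \<le> v m" if "s < n" "c s" for s
      using \<open>beats1 n c E i\<close> that unfolding beats1_def lexl_def rxE[symmetric] by force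
    then show ?thesis unfolding P_def price1_def using fin x0 by (subst Max_le_iff) auto
  qed
  have b2: "v m \<le> P" if "\<not> beats1 n c E i"
  proof -
    from that obtain s where s: "s < n" "c s" "\<not> lexl (rx (E s)) s (rx (E i)) i"
      unfolding beats1_def by blast
    then have "v m \<le> rx (E s)" unfolding lexl_def rxE by auto
    also have "rx (E s) \<le> P" unfolding P_def price1_def using fin s by (intro Max_ge) auto
    finally show ?thesis .
  qed
  show ?thesis
    unfolding A_def[symmetric] E_def[symmetric] out1_def
    using wA wE pr b1 b2 v0 x0 by (auto simp: P_def)
qed

definition rho :: "msg \<Rightarrow> real" where "rho a = rx a / real (rd a)"

definition prec :: "(nat \<Rightarrow> msg) \<Rightarrow> nat \<Rightarrow> nat \<Rightarrow> bool" where
  "prec acc j k \<longleftrightarrow> rho (acc j) > rho (acc k) \<or> (rho (acc j) = rho (acc k) \<and> j < k)"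

definition sbef :: "nat \<Rightarrow> (nat \<Rightarrow> bool) \<Rightarrow> (nat \<Rightarrow> msg) \<Rightarrow> nat \<Rightarrow> nat" where
  "sbef n c acc j = (\<Sum>s | s < n \<and> c s \<and> prec acc s j. rd (acc s))"

definition elig :: "nat \<Rightarrow> nat \<Rightarrow> (nat \<Rightarrow> bool) \<Rightarrow> (nat \<Rightarrow> msg) \<Rightarrow> nat \<Rightarrow> bool" where
  "elig n m c acc j \<longleftrightarrow> sbef n c acc j < m"

definition theta :: "nat \<Rightarrow> nat \<Rightarrow> (nat \<Rightarrow> bool) \<Rightarrow> (nat \<Rightarrow> msg) \<Rightarrow> real" where
  "theta n m c acc = Max (insert 0 {rho (acc s) | s. s < n \<and> c s \<and> m \<le> sbef n c acc s + rd (acc s)})"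

fun used :: "nat \<Rightarrow> nat \<Rightarrow> (nat \<Rightarrow> bool) \<Rightarrow> (nat \<Rightarrow> msg) \<Rightarrow> nat \<Rightarrow> nat" where
  "used n m c acc 0 = 0"
| "used n m c acc (Suc i) = used n m c acc i +
     (if i < n \<and> \<not> c i \<and> elig n m c acc i \<and> used n m c acc i + rd (acc i) \<le> m then rd (acc i) else 0)"

definition srv :: "nat \<Rightarrow> nat \<Rightarrow> (nat \<Rightarrow> bool) \<Rightarrow> (nat \<Rightarrow> msg) \<Rightarrow> nat \<Rightarrow> bool" where
  "srv n m c acc i \<longleftrightarrow> i < n \<and> \<not> c i \<and> elig n m c acc i \<and> used n m c acc i + rd (acc i) \<le> m"

definition out2 :: "nat \<Rightarrow> nat \<Rightarrow> (nat \<Rightarrow> bool) \<Rightarrow> (nat \<Rightarrow> msg) \<Rightarrow> (nat \<Rightarrow> nat) \<times> (nat \<Rightarrow> real)" where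
  "out2 n m c acc = ((\<lambda>i. if srv n m c acc i then rd (acc i) else 0),
                     (\<lambda>i. if srv n m c acc i then theta n m c acc * real (rd (acc i)) else 0))"

lemma rho_nonneg: "0 \<le> rho a"
  unfolding rho_def rx_def by simp

lemma used_Suc': "used n m c acc (Suc i) = used n m c acc i + fst (out2 n m c acc) i"
  by (simp add: out2_def srv_def)

lemma sum_used: "(\<Sum>i<k. fst (out2 n m c acc) i) = used n m c acc k"
  by (induction k) (simp_all add: used_Suc' del: used.simps(2))

lemma used_le: "used n m c acc k \<le> m"
  by (induction k) auto

lemma out2_feasible: "(\<Sum>i<n. fst (out2 n m c acc) i) \<le> m"
  using sum_used used_le by metis

lemma prec_irrefl: "\<not> prec acc s s"
  unfolding prec_def by simp

lemma sbef_cong: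
  assumes "\<And>s. s < n \<Longrightarrow> c s \<Longrightarrow> acc s = acc' s" "acc j = acc' j"
  shows "sbef n c acc j = sbef n c acc' j"
proof -
  have "{s. s < n \<and> c s \<and> prec acc s j} = {s. s < n \<and> c s \<and> prec acc' s j}"
    using assms unfolding prec_def by auto
  then show ?thesis unfolding sbef_def using assms
    by (intro sum.cong) auto
qed

lemma theta_cong:
  assumes "\<And>s. s < n \<Longrightarrow> c s \<Longrightarrow> acc s = acc' s"
  shows "theta n m c acc = theta n m c acc'"
proof -
  have "{rho (acc s) | s. s < n \<and> c s \<and> m \<le> sbef n c acc s + rd (acc s)} =
        {rho (acc' s) | s. s < n \<and> c s \<and> m \<le> sbef n c acc' s + rd (acc' s)}"
  proof -
    have "sbef n c acc s = sbef n c acc' s \<and> acc s = acc' s" if "s < n" "c s" for s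
      using sbef_cong[of n c acc acc' s] assms that by auto
    then show ?thesis by metis
  qed
  then show ?thesis unfolding theta_def by simp
qed

lemma used_cong:
  assumes "\<And>s. s < n \<Longrightarrow> c s \<Longrightarrow> acc s = acc' s" "\<And>j. j < i \<Longrightarrow> acc j = acc' j"
  shows "used n m c acc i = used n m c acc' i"
  using assms(2)
proof (induction i)
  case 0 then show ?case by simp
next
  case (Suc i)
  then have IH: "used n m c acc i = used n m c acc' i" by simp
  have ai: "acc i = acc' i" using Suc.prems by simp
  have "elig n m c acc i = elig n m c acc' i"
    unfolding elig_def using sbef_cong[of n c acc acc' i] assms(1) ai by simp
  then show ?case using IH ai by simp
qed

lemma out2_dep:
  assumes "i < n" "\<not> c i" "\<And>j. j < n \<Longrightarrow> c j \<or> j \<le> i \<Longrightarrow> acc j = acc' j"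
  shows "fst (out2 n m c acc) i = fst (out2 n m c acc') i \<and> snd (out2 n m c acc) i = snd (out2 n m c acc') i"
proof -
  have S: "\<And>s. s < n \<Longrightarrow> c s \<Longrightarrow> acc s = acc' s" using assms(3) by blast
  have ai: "acc i = acc' i" by (rule assms(3)) (use assms(1) in auto)
  have lt: "acc j = acc' j" if "j < i" for j by (rule assms(3)) (use assms(1) that in auto)
  have "used n m c acc i = used n m c acc' i"
  proof (rule used_cong)
    fix s assume "s < n" "c s" then show "acc s = acc' s" by (rule S)
  next
    fix j assume "j < i" then show "acc j = acc' j" by (rule lt)
  qed
  moreover have "elig n m c acc i = elig n m c acc' i"
    unfolding elig_def using sbef_cong[of n c acc acc' i] S ai by simp
  moreover have "theta n m c acc = theta n m c acc'"
    by (rule theta_cong) (rule S)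
  ultimately show ?thesis using ai by (simp add: out2_def srv_def)
qed

lemma out2_dep_sample:
  assumes "c i"
  shows "fst (out2 n m c acc) i = fst (out2 n m c acc') i \<and> snd (out2 n m c acc) i = snd (out2 n m c acc') i"
  using assms by (simp add: out2_def srv_def)

lemma theta_le:
  assumes "elig n m c acc i"
  shows "theta n m c acc \<le> rho (acc i)"
proof -
  have fin: "finite {rho (acc s) | s. s < n \<and> c s \<and> m \<le> sbef n c acc s + rd (acc s)}" by simp
  have "rho (acc s) \<le> rho (acc i)" if s: "s < n" "c s" "m \<le> sbef n c acc s + rd (acc s)" for s
  proof (rule ccontr)
    assume "\<not> rho (acc s) \<le> rho (acc i)"
    then have gt: "rho (acc s) > rho (acc i)" by simp
    define Zs where "Zs = {k. k < n \<and> c k \<and> prec acc k s}"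
    define Zi where "Zi = {k. k < n \<and> c k \<and> prec acc k i}"
    have sub: "insert s Zs \<subseteq> Zi" using gt s unfolding Zs_def Zi_def prec_def by auto
    have sn: "s \<notin> Zs" unfolding Zs_def using prec_irrefl by blast
    have fZs: "finite Zs" by (simp add: Zs_def)
    have sbZ: "sbef n c acc s = (\<Sum>k\<in>Zs. rd (acc k))" by (simp add: sbef_def Zs_def)
    have "sbef n c acc s + rd (acc s) = (\<Sum>k\<in>insert s Zs. rd (acc k))"
      using sn fZs sbZ by simp
    also have "\<dots> \<le> (\<Sum>k\<in>Zi. rd (acc k))"
      using sub by (intro sum_mono2) (auto simp: Zi_def)
    also have "\<dots> = sbef n c acc i" by (simp add: sbef_def Zi_def)
    finally show False using s(3) assms unfolding elig_def by simp
  qed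
  then show ?thesis unfolding theta_def using fin rho_nonneg
    by (subst Max_le_iff) auto
qed

lemma theta_ge:
  assumes "\<not> elig n m c acc i" and m1: "1 \<le> m"
  shows "rho (acc i) \<le> theta n m c acc"
proof -
  define Z where "Z = {k. k < n \<and> c k \<and> prec acc k i}"
  have fZ: "finite Z" by (simp add: Z_def)
  have sumZ: "m \<le> (\<Sum>k\<in>Z. rd (acc k))" using assms unfolding elig_def sbef_def Z_def by simp
  show ?thesis
  proof (cases "Z = {}")
    case True
    then show ?thesis using sumZ m1 by simp
  next
    case False
    define rm where "rm = Min ((\<lambda>k. rho (acc k)) ` Z)"
    define s where "s = Max {k \<in> Z. rho (acc k) = rm}"
    have rmin: "rm \<in> (\<lambda>k. rho (acc k)) ` Z" unfolding rm_def using fZ False by (intro Min_in) auto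
    have ne: "{k \<in> Z. rho (acc k) = rm} \<noteq> {}" using rmin by auto
    have fin2: "finite {k \<in> Z. rho (acc k) = rm}" using fZ by simp
    have sin: "s \<in> {k \<in> Z. rho (acc k) = rm}" unfolding s_def using Max_in[OF fin2 ne] .
    have sZ: "s \<in> Z" "rho (acc s) = rm" using sin by auto
    have kprec: "prec acc k s" if "k \<in> Z" "k \<noteq> s" for k
    proof -
      have "rm \<le> rho (acc k)" unfolding rm_def using fZ that by (intro Min_le) auto
      moreover have "rho (acc k) = rm \<Longrightarrow> k \<le> s" unfolding s_def using fin2 that by (intro Max_ge) auto
      ultimately show ?thesis unfolding prec_def using sZ that by force
    qed
    have "Z \<subseteq> insert s {k. k < n \<and> c k \<and> prec acc k s}"
      using kprec Z_def by auto
    then have "(\<Sum>k\<in>Z. rd (acc k)) \<le> (\<Sum>k\<in>insert s {k. k < n \<and> c k \<and> prec acc k s}. rd (acc k))"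
      by (intro sum_mono2) auto
    also have "\<dots> = rd (acc s) + sbef n c acc s"
      using prec_irrefl[of acc s] by (simp add: sbef_def)
    finally have ms: "m \<le> sbef n c acc s + rd (acc s)" using sumZ by simp
    have sn: "s < n" "c s" "prec acc s i" using sZ by (auto simp: Z_def)
    have "rho (acc s) \<le> theta n m c acc" unfolding theta_def using sn ms
      by (intro Max_ge) auto
    moreover have "rho (acc i) \<le> rho (acc s)" using sn(3) unfolding prec_def by auto
    ultimately show ?thesis by simp
  qed
qed

lemma theta_nonneg: "0 \<le> theta n m c acc"
  unfolding theta_def by (intro Max_ge) auto

lemma out2_ic:
  assumes v: "single_minded m v"
  shows "v (fst (out2 n m c (acc(i:=a))) i) - snd (out2 n m c (acc(i:=a))) i
       \<le> v (fst (out2 n m c (acc(i:=enc m v))) i) - snd (out2 n m c (acc(i:=enc m v))) i"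
proof (cases "i < n \<and> \<not> c i")
  case False
  then show ?thesis by (auto simp: out2_def srv_def)
next
  case True
  define A where "A = acc(i:=a)"
  define E where "E = acc(i:=enc m v)"
  have v0: "v 0 = 0" using sm_zero[OF v] .
  have can: "0 \<le> v m" "1 \<le> sd m v" "sd m v \<le> m" using sm_canon[OF v] by blast+
  define x where "x = v m"
  define d where "d = sd m v"
  define q where "q = rd a"
  have m1: "1 \<le> m" using can by simp
  have rdE: "rd (E i) = d" by (simp add: E_def d_def rd_enc)
  have rdA: "rd (A i) = q" by (simp add: A_def q_def)
  have rhoE: "rho (E i) = x / d" unfolding rho_def using rx_enc[OF v] rdE by (simp add: E_def x_def)
  have S: "A s = E s" if "s < n" "c s" for s using that True by (auto simp: A_def E_def)
  have th: "theta n m c A = theta n m c E" by (rule theta_cong) (rule S)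
  have us: "used n m c A i = used n m c E i"
  proof (rule used_cong)
    fix s assume "s < n" "c s" then show "A s = E s" by (rule S)
  next
    fix j assume "j < i" then show "A j = E j" by (simp add: A_def E_def)
  qed
  define \<theta> where "\<theta> = theta n m c E"
  define U where "U = used n m c E i"
  have t0: "0 \<le> \<theta>" unfolding \<theta>_def by (rule theta_nonneg)
  have sA: "srv n m c A i = (elig n m c A i \<and> U + q \<le> m)"
    unfolding srv_def U_def using True us rdA by simp
  have sE: "srv n m c E i = (elig n m c E i \<and> U + d \<le> m)"
    unfolding srv_def U_def using True rdE by simp
  have e1: "\<theta> * d \<le> x" if "elig n m c E i"
  proof -
    have "\<theta> \<le> x / d" using theta_le[OF that] rhoE by (simp add: \<theta>_def)
    then show ?thesis using can by (simp add: d_def pos_le_divide_eq)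
  qed
  have e2: "x \<le> \<theta> * d" if "\<not> elig n m c E i"
  proof -
    have "x / d \<le> \<theta>" using theta_ge[OF that m1] rhoE by (simp add: \<theta>_def)
    then show ?thesis using can by (simp add: d_def pos_divide_le_eq)
  qed
  have vq: "v q = (if d \<le> q then x else 0)" using sm_val[OF v, of q] by (simp add: x_def d_def)
  have LHS: "v (fst (out2 n m c A) i) - snd (out2 n m c A) i = (if srv n m c A i then v q - \<theta> * q else 0)"
    using rdA th v0 by (simp add: out2_def \<theta>_def)
  have RHS: "v (fst (out2 n m c E) i) - snd (out2 n m c E) i = (if srv n m c E i then x - \<theta> * d else 0)"
  proof -
    have "v d = x" using sm_val[OF v, of d] by (simp add: x_def d_def)
    then show ?thesis using rdE v0 by (simp add: out2_def \<theta>_def)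
  qed
  have R0: "0 \<le> (if srv n m c E i then x - \<theta> * d else 0)"
    using sE e1 by auto
  have "(if srv n m c A i then v q - \<theta> * q else 0) \<le> (if srv n m c E i then x - \<theta> * d else 0)"
  proof (cases "srv n m c A i")
    case False then show ?thesis using R0 by simp
  next
    case sa: True
    show ?thesis
    proof (cases "d \<le> q")
      case False
      then have "v q - \<theta> * q \<le> 0" using vq t0 by simp
      then show ?thesis using sa R0 by simp
    next
      case dq: True
      have mono: "\<theta> * d \<le> \<theta> * q" using dq t0 by (simp add: mult_left_mono)
      show ?thesis
      proof (cases "srv n m c E i")
        case True then show ?thesis using sa vq dq mono by simp
      next
        case se: False
        have "\<not> elig n m c E i" using se sE sA sa dq by auto
        then have "x \<le> \<theta> * d" by (rule e2)
        then show ?thesis using sa se vq dq mono by simp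
      qed
    qed
  qed
  then show ?thesis using LHS RHS by (simp add: A_def E_def)
qed

abbreviation CC :: "nat set \<Rightarrow> (nat \<Rightarrow> bool) pmf" where
  "CC I \<equiv> Pi_pmf I False (\<lambda>_. bernoulli_pmf (9/10))"

lemma finite_set_CC: "finite I \<Longrightarrow> finite (set_pmf (CC I))"
  by (subst set_Pi_pmf) (auto intro!: finite_PiE_dflt)

lemma exp_mono_fin:
  fixes f g :: "'a \<Rightarrow> real"
  assumes "finite (set_pmf M)" "\<And>x. x \<in> set_pmf M \<Longrightarrow> f x \<le> g x"
  shows "measure_pmf.expectation M f \<le> measure_pmf.expectation M g"
  using assms by (intro integral_mono_AE integrable_measure_pmf_finite) (auto simp: AE_measure_pmf_iff)

lemma exp_pair_fin:
  fixes f :: "'a \<times> 'b \<Rightarrow> real"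
  assumes A: "finite (set_pmf A)" and B: "finite (set_pmf B)"
  shows "measure_pmf.expectation (pair_pmf A B) f =
         measure_pmf.expectation A (\<lambda>a. measure_pmf.expectation B (\<lambda>b. f (a, b)))"
proof -
  have "measure_pmf.expectation (pair_pmf A B) f = (\<Sum>p\<in>set_pmf A \<times> set_pmf B. pmf (pair_pmf A B) p *\<^sub>R f p)"
    using A B by (intro integral_measure_pmf) auto
  also have "\<dots> = (\<Sum>a\<in>set_pmf A. \<Sum>b\<in>set_pmf B. pmf A a * (pmf B b * f (a, b)))"
    unfolding sum.cartesian_product by (intro sum.cong refl) (auto simp: pmf_pair)
  also have "\<dots> = (\<Sum>a\<in>set_pmf A. pmf A a *\<^sub>R measure_pmf.expectation B (\<lambda>b. f (a, b)))"
  proof (intro sum.cong refl)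
    fix a
    have "measure_pmf.expectation B (\<lambda>b. f (a, b)) = (\<Sum>b\<in>set_pmf B. pmf B b *\<^sub>R f (a, b))"
      using B by (intro integral_measure_pmf) auto
    then show "(\<Sum>b\<in>set_pmf B. pmf A a * (pmf B b * f (a, b))) = pmf A a *\<^sub>R measure_pmf.expectation B (\<lambda>b. f (a, b))"
      by (simp add: sum_distrib_left)
  qed
  also have "\<dots> = measure_pmf.expectation A (\<lambda>a. measure_pmf.expectation B (\<lambda>b. f (a, b)))"
    using A by (intro integral_measure_pmf[symmetric]) auto
  finally show ?thesis .
qed

lemma Pi_split:
  fixes f :: "(nat \<Rightarrow> bool) \<Rightarrow> real"
  assumes I: "finite I" and i: "i \<in> I"
  shows "measure_pmf.expectation (CC I) f =
         measure_pmf.expectation (bernoulli_pmf (9/10)) (\<lambda>y. measure_pmf.expectation (CC (I - {i})) (\<lambda>c. f (c(i := y))))"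
proof -
  have eq: "CC I = map_pmf (\<lambda>(y, g). g(i := y)) (pair_pmf (bernoulli_pmf (9/10)) (CC (I - {i})))"
    using Pi_pmf_insert[of "I - {i}" i False "\<lambda>_. bernoulli_pmf (9/10)"] I i
    by (simp add: insert_absorb)
  show ?thesis
    unfolding eq integral_map_pmf
    by (subst exp_pair_fin) (auto simp: finite_set_CC I)
qed

lemma bern910: "measure_pmf.expectation (bernoulli_pmf (9/10)) f = f True * (9/10) + f False * (1/(10::real))"
  by simp

lemma exp_const: "measure_pmf.expectation M (\<lambda>_. (k::real)) = k"
  by simp

definition strat :: "nat \<Rightarrow> nat \<Rightarrow> msg strategy" where
  "strat m = (\<lambda>i v h. enc m v)"

definition mech1 :: "nat \<Rightarrow> nat \<Rightarrow> (nat \<Rightarrow> bool) \<Rightarrow> msg mech" where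
  "mech1 n m c = mkT (ordc n c) (\<lambda>_. []) (out1 n m c)"

definition mech2 :: "nat \<Rightarrow> nat \<Rightarrow> (nat \<Rightarrow> bool) \<Rightarrow> msg mech" where
  "mech2 n m c = mkT (ordc n c) (\<lambda>_. []) (out2 n m c)"

definition tr :: "nat \<Rightarrow> nat \<Rightarrow> (nat \<Rightarrow> valuation) \<Rightarrow> nat \<Rightarrow> msg" where
  "tr m n vs = (\<lambda>j. if j < n then enc m (vs j) else [])"

lemma mech1_ok: "det_mech n m (mech1 n m c) (strat m) \<and> OSP n m (mech1 n m c) (strat m)"
proof
  show "det_mech n m (mech1 n m c) (strat m)"
    unfolding mech1_def by (rule det_mech_mkT) (auto simp: ordc_set out1_feasible)
  show "OSP n m (mech1 n m c) (strat m)"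
    unfolding mech1_def strat_def
  proof (rule OSP_mkT[OF ordc_distinct])
    fix k and acc acc' :: "nat \<Rightarrow> msg"
    assume kk: "k < length (ordc n c)" and ag: "\<And>j. j \<le> k \<Longrightarrow> acc (ordc n c ! j) = acc' (ordc n c ! j)"
    show "fst (out1 n m c acc) (ordc n c ! k) = fst (out1 n m c acc') (ordc n c ! k) \<and>
               snd (out1 n m c acc) (ordc n c ! k) = snd (out1 n m c acc') (ordc n c ! k)"
      by (rule dep_ordc[where out="out1 n m c" and acc=acc and acc'=acc', OF _ _ kk ag], (rule out1_dep; assumption), (rule out1_dep_sample; assumption))
  next
    fix i v acc a assume "i \<in> set (ordc n c)" "single_minded m v"
    then show "v (fst (out1 n m c (acc(i := a))) i) - snd (out1 n m c (acc(i := a))) i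
             \<le> v (fst (out1 n m c (acc(i := enc m v))) i) - snd (out1 n m c (acc(i := enc m v))) i"
      by (intro out1_ic)
  qed
qed

lemma mech2_ok: "det_mech n m (mech2 n m c) (strat m) \<and> OSP n m (mech2 n m c) (strat m)"
proof
  show "det_mech n m (mech2 n m c) (strat m)"
    unfolding mech2_def by (rule det_mech_mkT) (auto simp: ordc_set out2_feasible)
  show "OSP n m (mech2 n m c) (strat m)"
    unfolding mech2_def strat_def
  proof (rule OSP_mkT[OF ordc_distinct])
    fix k and acc acc' :: "nat \<Rightarrow> msg"
    assume kk: "k < length (ordc n c)" and ag: "\<And>j. j \<le> k \<Longrightarrow> acc (ordc n c ! j) = acc' (ordc n c ! j)"
    show "fst (out2 n m c acc) (ordc n c ! k) = fst (out2 n m c acc') (ordc n c ! k) \<and>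
               snd (out2 n m c acc) (ordc n c ! k) = snd (out2 n m c acc') (ordc n c ! k)"
      by (rule dep_ordc[where out="out2 n m c" and acc=acc and acc'=acc', OF _ _ kk ag], (rule out2_dep; assumption), (rule out2_dep_sample; assumption))
  next
    fix i v acc a assume "i \<in> set (ordc n c)" "single_minded m v"
    then show "v (fst (out2 n m c (acc(i := a))) i) - snd (out2 n m c (acc(i := a))) i
             \<le> v (fst (out2 n m c (acc(i := enc m v))) i) - snd (out2 n m c (acc(i := enc m v))) i"
      by (intro out2_ic)
  qed
qed

lemma alloc_mkT_const:
  assumes "distinct ord"
  shows "alloc (mkT ord acc0 out) (\<lambda>j h. e j) = fst (out (\<lambda>j. if j \<in> set ord then e j else acc0 j))"
proof -
  obtain P A where R: "run (mkT ord acc0 out) [] (\<lambda>j h. e j) = ([] @ P, fst (out A), snd (out A))"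
    "\<forall>j<length ord. P!j = e (ord!j) \<and> A (ord!j) = P!j" "\<forall>z. z \<notin> set ord \<longrightarrow> A z = acc0 z"
    using run_mkT[OF assms, of acc0 out "[]" "\<lambda>j h. e j"] by blast
  have "A = (\<lambda>j. if j \<in> set ord then e j else acc0 j)"
  proof
    fix j show "A j = (if j \<in> set ord then e j else acc0 j)"
    proof (cases "j \<in> set ord")
      case True
      then obtain k where "k < length ord" "ord ! k = j" by (meson in_set_conv_nth)
      then show ?thesis using R(2) True by auto
    next
      case False then show ?thesis using R(3) by simp
    qed
  qed
  then show ?thesis unfolding alloc_def using R(1) by simp
qed

lemma welfare1: "welfare n (mech1 n m c) (strat m) vs = (\<Sum>i<n. vs i (fst (out1 n m c (tr m n vs)) i))"
proof -
  have "(\<lambda>j. strat m j (vs j)) = (\<lambda>j h. enc m (vs j))" by (simp add: strat_def)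
  then show ?thesis unfolding welfare_def mech1_def
    by (simp add: alloc_mkT_const[OF ordc_distinct] ordc_set tr_def[symmetric] lessThan_def)
qed

lemma welfare2: "welfare n (mech2 n m c) (strat m) vs = (\<Sum>i<n. vs i (fst (out2 n m c (tr m n vs)) i))"
proof -
  have "(\<lambda>j. strat m j (vs j)) = (\<lambda>j h. enc m (vs j))" by (simp add: strat_def)
  then show ?thesis unfolding welfare_def mech2_def
    by (simp add: alloc_mkT_const[OF ordc_distinct] ordc_set tr_def[symmetric] lessThan_def)
qed

lemma lexmax:
  fixes f :: "nat \<Rightarrow> real"
  assumes "finite Q" "Q \<noteq> {}"
  shows "\<exists>t\<in>Q. \<forall>j\<in>Q. j \<noteq> t \<longrightarrow> lexl (f j) j (f t) t"
proof -
  define M where "M = Max (f ` Q)"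
  define t where "t = Max {i \<in> Q. f i = M}"
  have "M \<in> f ` Q" unfolding M_def using assms by (intro Max_in) auto
  then have ne: "{i \<in> Q. f i = M} \<noteq> {}" by auto
  have fin: "finite {i \<in> Q. f i = M}" using assms by simp
  have tin: "t \<in> {i \<in> Q. f i = M}" unfolding t_def using Max_in[OF fin ne] .
  have "lexl (f j) j (f t) t" if "j \<in> Q" "j \<noteq> t" for j
  proof -
    have "f j \<le> M" unfolding M_def using assms that by (intro Max_ge) auto
    moreover have "f j = M \<Longrightarrow> j \<le> t" unfolding t_def using fin that by (intro Max_ge) auto
    ultimately show ?thesis using tin that unfolding lexl_def by force
  qed
  then show ?thesis using tin by blast
qed

lemma lexl_asym: "lexl a i b j \<Longrightarrow> \<not> lexl b j a i"
  unfolding lexl_def by auto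

locale Setting =
  fixes n m :: nat and vs :: "nat \<Rightarrow> valuation"
  assumes sm: "\<And>i. i < n \<Longrightarrow> single_minded m (vs i)" and n1: "1 \<le> n"
begin

definition "xv i = vs i m"
definition "xmax = Max (xv ` {..<n})"

lemma xv_nonneg: "i < n \<Longrightarrow> 0 \<le> xv i"
  unfolding xv_def using sm_nonneg[OF sm] by blast

lemma sumv_nonneg: "0 \<le> (\<Sum>i<n. vs i (f i))"
proof (intro sum_nonneg)
  fix i assume "i \<in> {..<n}" then show "0 \<le> vs i (f i)" using sm_nonneg[OF sm] by simp
qed

lemma rx_tr: "i < n \<Longrightarrow> rx (tr m n vs i) = xv i"
  unfolding tr_def xv_def using rx_enc[OF sm] by simp

lemma W1_point:
  assumes t: "t < n" "\<forall>j<n. j \<noteq> t \<longrightarrow> lexl (xv j) j (xv t) t"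
    and ct: "\<not> c t"
    and oth: "\<forall>j<n. j \<noteq> t \<longrightarrow> \<not> c j \<longrightarrow> \<not> beats1 n c (tr m n vs) j"
  shows "xv t \<le> (\<Sum>i<n. vs i (fst (out1 n m c (tr m n vs)) i))"
proof -
  have b: "beats1 n c (tr m n vs) t"
    unfolding beats1_def
  proof (intro allI impI)
    fix s assume "s < n" "c s"
    then have "s \<noteq> t" using ct by auto
    then show "lexl (rx (tr m n vs s)) s (rx (tr m n vs t)) t" using t \<open>s < n\<close> rx_tr by simp
  qed
  have w: "win1 n c (tr m n vs) t" unfolding win1_def using t ct b oth by auto
  have "xv t = vs t (fst (out1 n m c (tr m n vs)) t)" using w by (simp add: out1_def xv_def)
  also have "\<dots> \<le> (\<Sum>i<n. vs i (fst (out1 n m c (tr m n vs)) i))"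
    using t(1) by (intro member_le_sum) (auto intro: sm_nonneg[OF sm])
  finally show ?thesis .
qed

lemma W1_bound:
  "9/100 * xmax \<le> measure_pmf.expectation (CC {..<n}) (\<lambda>c. \<Sum>i<n. vs i (fst (out1 n m c (tr m n vs)) i))"
proof -
  obtain t where t: "t < n" "\<forall>j<n. j \<noteq> t \<longrightarrow> lexl (xv j) j (xv t) t"
    using lexmax[of "{..<n}" xv] n1 by auto
  have xm: "xmax = xv t"
  proof -
    have "xv j \<le> xv t" if "j < n" for j using t that unfolding lexl_def by (cases "j = t") auto
    then show ?thesis unfolding xmax_def using t by (intro Max_eqI) auto
  qed
  have x0: "0 \<le> xv t" using xv_nonneg t by simp
  let ?W = "\<lambda>c. \<Sum>i<n. vs i (fst (out1 n m c (tr m n vs)) i)"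
  show ?thesis
  proof (cases "n = 1")
    case True
    have pt: "(if \<not> c t then xv t else 0) \<le> ?W c" for c
    proof (cases "c t")
      case False
      have "\<forall>j<n. j \<noteq> t \<longrightarrow> \<not> c j \<longrightarrow> \<not> beats1 n c (tr m n vs) j" using True t by auto
      then show ?thesis using W1_point[of t c, OF t False] False by simp
    next
      case True then show ?thesis using sumv_nonneg[of "\<lambda>i. fst (out1 n m c (tr m n vs)) i"] by auto
    qed
    have "measure_pmf.expectation (CC {..<n}) (\<lambda>c. if \<not> c t then xv t else 0) = xv t / 10"
      using t by (subst Pi_split[of _ t]) auto
    moreover have "measure_pmf.expectation (CC {..<n}) (\<lambda>c. if \<not> c t then xv t else 0) \<le> measure_pmf.expectation (CC {..<n}) ?W"
      using pt by (intro exp_mono_fin finite_set_CC) auto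
    ultimately show ?thesis using xm x0 by simp
  next
    case False
    then have n2: "2 \<le> n" using n1 by simp
    obtain s where s: "s \<in> {..<n} - {t}" "\<forall>j\<in>{..<n} - {t}. j \<noteq> s \<longrightarrow> lexl (xv j) j (xv s) s"
    proof -
      have ne: "{..<n} - {t} \<noteq> {}"
      proof (cases "t = 0")
        case True then have "1 \<in> {..<n} - {t}" using n2 by auto
        then show ?thesis by blast
      next
        case False then have "0 \<in> {..<n} - {t}" using n2 by auto
        then show ?thesis by blast
      qed
      show ?thesis using lexmax[of "{..<n} - {t}" xv] ne that by blast
    qed
    have pt: "(if \<not> c t \<and> c s then xv t else 0) \<le> ?W c" for c
    proof (cases "\<not> c t \<and> c s")
      case True
      have "\<forall>j<n. j \<noteq> t \<longrightarrow> \<not> c j \<longrightarrow> \<not> beats1 n c (tr m n vs) j"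
      proof (intro allI impI)
        fix j assume j: "j < n" "j \<noteq> t" "\<not> c j"
        then have "j \<noteq> s" using True by auto
        then have "lexl (xv j) j (xv s) s" using s j by auto
        then have "\<not> lexl (rx (tr m n vs s)) s (rx (tr m n vs j)) j"
          using lexl_asym rx_tr j s by auto
        then show "\<not> beats1 n c (tr m n vs) j" unfolding beats1_def using True s by auto
      qed
      then show ?thesis using W1_point[of t c, OF t] True by simp
    next
      case False then show ?thesis using sumv_nonneg[of "\<lambda>i. fst (out1 n m c (tr m n vs)) i"] by auto
    qed
    have st: "s \<noteq> t" "s < n" using s by auto
    have "measure_pmf.expectation (CC {..<n}) (\<lambda>c. if \<not> c t \<and> c s then xv t else 0)
        = measure_pmf.expectation (CC ({..<n} - {t})) (\<lambda>c. if c s then xv t else 0) / 10"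
      using t st by (subst Pi_split[of _ t]) auto
    also have "measure_pmf.expectation (CC ({..<n} - {t})) (\<lambda>c. if c s then xv t else 0) = 9/10 * xv t"
      using t st by (subst Pi_split[of _ s]) auto
    finally have "measure_pmf.expectation (CC {..<n}) (\<lambda>c. if \<not> c t \<and> c s then xv t else 0) = 9/100 * xv t"
      by simp
    moreover have "measure_pmf.expectation (CC {..<n}) (\<lambda>c. if \<not> c t \<and> c s then xv t else 0) \<le> measure_pmf.expectation (CC {..<n}) ?W"
      using pt by (intro exp_mono_fin finite_set_CC) auto
    ultimately show ?thesis using xm by simp
  qed
qed

end

lemma lexmin:
  fixes f :: "nat \<Rightarrow> real"
  assumes "finite Q" "Q \<noteq> {}"
  shows "\<exists>t\<in>Q. \<forall>j\<in>Q. j \<noteq> t \<longrightarrow> (f t > f j \<or> (f t = f j \<and> t < j))"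
proof -
  define M where "M = Max (f ` Q)"
  define t where "t = Min {i \<in> Q. f i = M}"
  have "M \<in> f ` Q" unfolding M_def using assms by (intro Max_in) auto
  then have ne: "{i \<in> Q. f i = M} \<noteq> {}" by auto
  have fin: "finite {i \<in> Q. f i = M}" using assms by simp
  have tin: "t \<in> {i \<in> Q. f i = M}" unfolding t_def using Min_in[OF fin ne] .
  have "f t > f j \<or> (f t = f j \<and> t < j)" if "j \<in> Q" "j \<noteq> t" for j
  proof -
    have "f j \<le> M" unfolding M_def using assms that by (intro Max_ge) auto
    moreover have "f j = M \<Longrightarrow> t \<le> j" unfolding t_def using fin that by (intro Min_le) auto
    ultimately show ?thesis using tin that by force
  qed
  then show ?thesis using tin by blast
qed

context
  fixes rh :: "nat \<Rightarrow> real" and dv :: "nat \<Rightarrow> nat" and M :: nat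
begin

definition "pr j k \<longleftrightarrow> rh j > rh k \<or> (rh j = rh k \<and> j < k)"

definition "inr Q c j = (\<Sum>k\<in>Q. if c k \<and> pr k j then dv k else 0)"

definition "Y Q b c = (\<Sum>j\<in>Q. if \<not> c j \<and> real (inr Q c j) < b then real (dv j) else 0)"

lemma pr_irrefl: "\<not> pr k k" unfolding pr_def by simp
lemma pr_asym: "pr j k \<Longrightarrow> \<not> pr k j" unfolding pr_def by auto
lemma pr_total: "j \<noteq> k \<Longrightarrow> pr j k \<or> pr k j" unfolding pr_def by auto
lemma pr_trans: "pr i j \<Longrightarrow> pr j k \<Longrightarrow> pr i k" unfolding pr_def by auto

lemma pr_min:
  assumes "finite Q" "Q \<noteq> {}"
  shows "\<exists>t\<in>Q. \<forall>j\<in>Q. j \<noteq> t \<longrightarrow> pr t j"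
  using lexmin[OF assms, of rh] unfolding pr_def by blast

lemma Y_nonpos: "b \<le> 0 \<Longrightarrow> Y Q b c = 0"
  unfolding Y_def by (intro sum.neutral) auto

lemma Y_nonneg: "0 \<le> Y Q b c"
  unfolding Y_def by (intro sum_nonneg) auto

lemma Y_upd: "j \<notin> Q \<Longrightarrow> Y Q b (c(j:=y)) = Y Q b c"
proof -
  assume j: "j \<notin> Q"
  have "inr Q (c(j:=y)) k = inr Q c k" for k
    unfolding inr_def using j by (intro sum.cong) auto
  then show ?thesis unfolding Y_def using j by (intro sum.cong) auto
qed

lemma Y_decomp:
  assumes fin: "finite Q" and j0: "j0 \<in> Q" and mn: "\<forall>k\<in>Q. k \<noteq> j0 \<longrightarrow> pr j0 k"
  shows "Y Q b c = (if \<not> c j0 \<and> 0 < b then real (dv j0) else 0) + Y (Q - {j0}) (if c j0 then b - dv j0 else b) c"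
proof -
  have i0: "inr Q c j0 = 0"
    unfolding inr_def
  proof (intro sum.neutral ballI)
    fix k assume "k \<in> Q"
    then have "\<not> pr k j0" using mn pr_asym pr_irrefl by (cases "k = j0") auto
    then show "(if c k \<and> pr k j0 then dv k else 0) = 0" by simp
  qed
  have ij: "inr Q c j = (if c j0 then dv j0 else 0) + inr (Q - {j0}) c j" if "j \<in> Q - {j0}" for j
  proof -
    have "pr j0 j" using mn that by auto
    then show ?thesis unfolding inr_def using fin j0 by (subst sum.remove[of _ j0]) auto
  qed
  have "Y Q b c = (if \<not> c j0 \<and> real (inr Q c j0) < b then real (dv j0) else 0) +
     (\<Sum>j\<in>Q - {j0}. if \<not> c j \<and> real (inr Q c j) < b then real (dv j) else 0)"
    unfolding Y_def using fin j0 by (subst sum.remove[of _ j0]) auto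
  also have "(\<Sum>j\<in>Q - {j0}. if \<not> c j \<and> real (inr Q c j) < b then real (dv j) else 0) =
     Y (Q - {j0}) (if c j0 then b - dv j0 else b) c"
    unfolding Y_def using ij by (intro sum.cong refl) (auto simp: algebra_simps)
  finally show ?thesis using i0 by simp
qed

lemma wald:
  assumes "finite I" "Q \<subseteq> I" "0 < b" "\<And>j. j \<in> Q \<Longrightarrow> dv j \<le> M"
  shows "measure_pmf.expectation (CC I) (Y Q b) \<le> (b + M) / 9"
  using assms
proof (induction "card Q" arbitrary: Q I b rule: less_induct)
  case less
  have finQ: "finite Q" using less.prems finite_subset by blast
  show ?case
  proof (cases "Q = {}")
    case True
    then have "Y Q b = (\<lambda>_. 0)" unfolding Y_def by auto
    then show ?thesis using less.prems by simp
  next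
    case False
    obtain j0 where j0: "j0 \<in> Q" "\<forall>k\<in>Q. k \<noteq> j0 \<longrightarrow> pr j0 k" using pr_min[OF finQ False] by blast
    define Q' where "Q' = Q - {j0}"
    define I' where "I' = I - {j0}"
    define d0 where "d0 = real (dv j0)"
    have d0: "0 \<le> d0" "d0 \<le> M" using less.prems j0 by (auto simp: d0_def)
    have j0I: "j0 \<in> I" using j0 less.prems by auto
    have cardQ': "card Q' < card Q" unfolding Q'_def by (rule card_Diff1_less[OF finQ j0(1)])
    have fI': "finite I'" "Q' \<subseteq> I'" using less.prems by (auto simp: I'_def Q'_def)
    have dQ': "\<And>j. j \<in> Q' \<Longrightarrow> dv j \<le> M" using less.prems by (auto simp: Q'_def)
    have IH: "measure_pmf.expectation (CC I') (Y Q' b') \<le> (b' + M) / 9" if "0 < b'" for b'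
      using less.hyps[OF cardQ' fI' that dQ'] .
    have IH0: "measure_pmf.expectation (CC I') (Y Q' b') = 0" if "b' \<le> 0" for b'
    proof -
      have "Y Q' b' = (\<lambda>_. 0)" using Y_nonpos[OF that] by (intro ext) blast
      then show ?thesis by simp
    qed
    have j0Q': "j0 \<notin> Q'" by (simp add: Q'_def)
    have dec: "Y Q b (c(j0 := y)) = (if \<not> y \<and> 0 < b then d0 else 0) + Y Q' (if y then b - d0 else b) c" for c y
      using Y_decomp[OF finQ j0(1) j0(2), of b "c(j0:=y)"] Y_upd[OF j0Q'] by (simp add: Q'_def d0_def)
    have fin': "finite (set_pmf (CC I'))" using fI' finite_set_CC by blast
    have lin: "measure_pmf.expectation (CC I') (\<lambda>c. a + Y Q' b' c) = a + measure_pmf.expectation (CC I') (Y Q' b')" for a b'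
      using fin' by (subst Bochner_Integration.integral_add) (auto intro: integrable_measure_pmf_finite)
    have "measure_pmf.expectation (CC I) (Y Q b) =
          measure_pmf.expectation (bernoulli_pmf (9/10)) (\<lambda>y. measure_pmf.expectation (CC I') (\<lambda>c. Y Q b (c(j0 := y))))"
      unfolding I'_def using less.prems j0I by (intro Pi_split) auto
    also have "\<dots> = measure_pmf.expectation (CC I') (Y Q' (b - d0)) * (9/10) + (d0 + measure_pmf.expectation (CC I') (Y Q' b)) * (1/10)"
      unfolding bern910 dec using less.prems lin by simp
    also have "\<dots> \<le> (b + M) / 9"
    proof (cases "0 < b - d0")
      case True
      then show ?thesis using IH[OF True] IH[OF less.prems(3)] d0 by (simp add: algebra_simps)
    next
      case False
      then show ?thesis using IH0[of "b - d0"] IH[OF less.prems(3)] d0 less.prems(3) by (simp add: algebra_simps)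
    qed
    finally show ?thesis .
  qed
qed

end

context Setting begin

definition "dv i = sd m (vs i)"
definition "rh i = xv i / real (dv i)"
definition "cum i = (\<Sum>k<n. if pr rh k i \<or> k = i then dv k else 0)"
definition "G = {i. i < n \<and> cum i \<le> m}"
definition "Gs = {i \<in> G. 2 * dv i \<le> m}"
definition "Xo i c = Y rh dv ({..<n} - {i}) (real m) c"

lemma dv_bounds: "i < n \<Longrightarrow> 1 \<le> dv i \<and> dv i \<le> m"
  unfolding dv_def using sm_canon[OF sm] by blast

lemma m1: "1 \<le> m" using dv_bounds[of 0] n1 by auto

lemma vs_val: "i < n \<Longrightarrow> vs i q = (if dv i \<le> q then xv i else 0)"
  unfolding dv_def xv_def using sm_val[OF sm] by blast

lemma rd_tr: "i < n \<Longrightarrow> rd (tr m n vs i) = dv i"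
  unfolding tr_def dv_def by (simp add: rd_enc)

lemma rho_tr: "i < n \<Longrightarrow> rho (tr m n vs i) = rh i"
  unfolding rho_def rh_def using rx_tr rd_tr by simp

lemma prec_tr: "j < n \<Longrightarrow> k < n \<Longrightarrow> prec (tr m n vs) j k = pr rh j k"
  unfolding prec_def pr_def using rho_tr by simp

lemma sbef_tr:
  assumes "j < n" "\<not> c i"
  shows "sbef n c (tr m n vs) j = inr rh dv ({..<n} - {i}) c j"
proof -
  have "sbef n c (tr m n vs) j = (\<Sum>k\<in>{..<n}. if c k \<and> prec (tr m n vs) k j then rd (tr m n vs k) else 0)"
    unfolding sbef_def by (subst sum.inter_filter[symmetric]) (auto simp: lessThan_def conj_commute)
  also have "\<dots> = (\<Sum>k\<in>{..<n}. if c k \<and> pr rh k j then dv k else 0)"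
    using assms prec_tr rd_tr by (intro sum.cong) auto
  also have "\<dots> = (\<Sum>k\<in>{..<n} - {i}. if c k \<and> pr rh k j then dv k else 0)"
    using assms by (intro sum.mono_neutral_right) auto
  finally show ?thesis unfolding inr_def .
qed

lemma served:
  assumes i: "i \<in> Gs" and ci: "\<not> c i" and X: "2 * Xo i c \<le> m"
  shows "srv n m c (tr m n vs) i"
proof -
  let ?T = "tr m n vs"
  have iG: "i < n" "cum i \<le> m" "2 * dv i \<le> m" using i by (auto simp: Gs_def G_def)
  have db: "1 \<le> dv i" using dv_bounds iG by blast
  have "sbef n c ?T i + dv i \<le> cum i"
  proof -
    have "sbef n c ?T i = (\<Sum>k\<in>{..<n}. if c k \<and> pr rh k i then dv k else 0)"
      unfolding sbef_tr[of i c i, OF iG(1) ci] inr_def using ci by (intro sum.mono_neutral_left) auto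
    moreover have "dv i = (\<Sum>k\<in>{..<n}. if k = i then dv k else 0)" using iG by simp
    ultimately have "sbef n c ?T i + dv i = (\<Sum>k\<in>{..<n}. (if c k \<and> pr rh k i then dv k else 0) + (if k = i then dv k else 0))"
      by (simp add: sum.distrib)
    also have "\<dots> \<le> cum i" unfolding cum_def
      by (intro sum_mono) (auto simp: pr_irrefl)
    finally show ?thesis .
  qed
  then have el: "elig n m c ?T i" unfolding elig_def using iG db by simp
  have us: "real (used n m c ?T i) \<le> Xo i c"
  proof -
    have "used n m c ?T i = (\<Sum>j<i. fst (out2 n m c ?T) j)" using sum_used by metis
    then have "real (used n m c ?T i) = (\<Sum>j<i. real (fst (out2 n m c ?T) j))" by simp
    also have "\<dots> \<le> (\<Sum>j<i. if \<not> c j \<and> real (inr rh dv ({..<n} - {i}) c j) < real m then real (dv j) else 0)"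
    proof (intro sum_mono)
      fix j assume "j \<in> {..<i}"
      then have j: "j < i" "j < n" using iG by auto
      show "real (fst (out2 n m c ?T) j) \<le> (if \<not> c j \<and> real (inr rh dv ({..<n} - {i}) c j) < real m then real (dv j) else 0)"
      proof (cases "srv n m c ?T j")
        case True
        then have "\<not> c j" "sbef n c ?T j < m" by (auto simp: srv_def elig_def)
        then show ?thesis using True sbef_tr[of j c i, OF j(2) ci] rd_tr[OF j(2)] by (simp add: out2_def)
      next
        case False then show ?thesis by (simp add: out2_def)
      qed
    qed
    also have "\<dots> \<le> Xo i c"
      unfolding Xo_def Y_def using iG by (intro sum_mono2) auto
    finally show ?thesis .
  qed
  have "used n m c ?T i + rd (?T i) \<le> m"
  proof -
    have "real (used n m c ?T i) + real (dv i) \<le> real m" using us X iG by linarith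
    then show ?thesis using rd_tr[OF iG(1)] by linarith
  qed
  then show ?thesis unfolding srv_def using iG ci el by simp
qed

lemma Xo_nonneg: "0 \<le> Xo i c" unfolding Xo_def by (rule Y_nonneg)

lemma W2_point:
  "(\<Sum>i\<in>Gs. xv i * (if c i then 0 else 1 - 2 * Xo i c / m)) \<le> (\<Sum>i<n. vs i (fst (out2 n m c (tr m n vs)) i))"
proof -
  let ?T = "tr m n vs"
  have GsS: "Gs \<subseteq> {..<n}" by (auto simp: Gs_def G_def)
  have "(\<Sum>i\<in>Gs. xv i * (if c i then 0 else 1 - 2 * Xo i c / m)) \<le> (\<Sum>i\<in>Gs. vs i (fst (out2 n m c ?T) i))"
  proof (intro sum_mono)
    fix i assume i: "i \<in> Gs"
    then have iN: "i < n" using GsS by auto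
    have x0: "0 \<le> xv i" using xv_nonneg iN by simp
    have v0: "0 \<le> vs i (fst (out2 n m c ?T) i)" using sm_nonneg[OF sm[OF iN]] .
    show "xv i * (if c i then 0 else 1 - 2 * Xo i c / m) \<le> vs i (fst (out2 n m c ?T) i)"
    proof (cases "\<not> c i \<and> 2 * Xo i c \<le> m")
      case True
      then have "srv n m c ?T i" using served i by blast
      then have "vs i (fst (out2 n m c ?T) i) = xv i" using vs_val[OF iN] rd_tr[OF iN] by (simp add: out2_def)
      moreover have "xv i * (1 - 2 * Xo i c / m) \<le> xv i" using x0 Xo_nonneg m1
        by (simp add: mult_left_le)
      ultimately show ?thesis using True by simp
    next
      case False
      then consider "c i" | "m < 2 * Xo i c" by linarith
      then show ?thesis
      proof cases
        case 1 then show ?thesis using v0 by simp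
      next
        case 2
        then have "1 - 2 * Xo i c / m \<le> 0" using m1 by (simp add: field_simps)
        then have "xv i * (1 - 2 * Xo i c / m) \<le> 0" using x0 by (simp add: mult_nonneg_nonpos)
        then show ?thesis using v0 by auto
      qed
    qed
  qed
  also have "\<dots> \<le> (\<Sum>i<n. vs i (fst (out2 n m c ?T) i))"
    using GsS by (intro sum_mono2) (auto intro: sm_nonneg[OF sm])
  finally show ?thesis .
qed

lemma term_exp:
  assumes iN: "i < n"
  shows "1/18 \<le> measure_pmf.expectation (CC {..<n}) (\<lambda>c. if c i then 0 else 1 - 2 * Xo i c / m)"
proof -
  define I' where "I' = {..<n} - {i}"
  have up: "Xo i (c(i := y)) = Xo i c" for c y unfolding Xo_def by (rule Y_upd) simp
  have fin': "finite (set_pmf (CC I'))" by (simp add: I'_def finite_set_CC)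
  have W: "measure_pmf.expectation (CC I') (Xo i) \<le> (real m + m) / 9"
    unfolding Xo_def I'_def using m1 dv_bounds by (intro wald) auto
  have "measure_pmf.expectation (CC {..<n}) (\<lambda>c. if c i then 0 else 1 - 2 * Xo i c / m)
      = measure_pmf.expectation (CC I') (\<lambda>c. 1 - 2 * Xo i c / m) * (1/10)"
    unfolding I'_def using iN by (subst Pi_split[of _ i]) (auto simp: up)
  also have "measure_pmf.expectation (CC I') (\<lambda>c. 1 - 2 * Xo i c / m) = 1 - 2 * measure_pmf.expectation (CC I') (Xo i) / m"
    using fin' by (subst Bochner_Integration.integral_diff) (auto intro: integrable_measure_pmf_finite)
  finally have e: "measure_pmf.expectation (CC {..<n}) (\<lambda>c. if c i then 0 else 1 - 2 * Xo i c / m)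
      = (1 - 2 * measure_pmf.expectation (CC I') (Xo i) / m) * (1/10)" .
  have "2 * measure_pmf.expectation (CC I') (Xo i) / m \<le> 4/9"
    using W m1 by (simp add: field_simps)
  then show ?thesis unfolding e by simp
qed

lemma W2_bound:
  "(\<Sum>i\<in>Gs. xv i) / 18 \<le> measure_pmf.expectation (CC {..<n}) (\<lambda>c. \<Sum>i<n. vs i (fst (out2 n m c (tr m n vs)) i))"
proof -
  have GsS: "Gs \<subseteq> {..<n}" by (auto simp: Gs_def G_def)
  have fin: "finite (set_pmf (CC {..<n}))" by (simp add: finite_set_CC)
  have "(\<Sum>i\<in>Gs. xv i) / 18 = (\<Sum>i\<in>Gs. xv i * (1/18))" by (simp add: sum_divide_distrib)
  also have "\<dots> \<le> (\<Sum>i\<in>Gs. xv i * measure_pmf.expectation (CC {..<n}) (\<lambda>c. if c i then 0 else 1 - 2 * Xo i c / m))"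
    using GsS term_exp xv_nonneg by (intro sum_mono mult_left_mono) auto
  also have "\<dots> = measure_pmf.expectation (CC {..<n}) (\<lambda>c. \<Sum>i\<in>Gs. xv i * (if c i then 0 else 1 - 2 * Xo i c / m))"
    using fin by (subst Bochner_Integration.integral_sum) (auto intro: integrable_measure_pmf_finite)
  also have "\<dots> \<le> measure_pmf.expectation (CC {..<n}) (\<lambda>c. \<Sum>i<n. vs i (fst (out2 n m c (tr m n vs)) i))"
    using fin W2_point by (intro exp_mono_fin) auto
  finally show ?thesis .
qed

end

context Setting begin

lemma xmax_ge: "i < n \<Longrightarrow> xv i \<le> xmax"
  unfolding xmax_def by (intro Max_ge) auto

lemma xmax_nonneg: "0 \<le> xmax"
  using xmax_ge[of 0] xv_nonneg[of 0] n1 by simp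

lemma xv_eq: "i < n \<Longrightarrow> xv i = rh i * dv i"
  unfolding rh_def using dv_bounds[of i] by simp

lemma rh_nonneg: "i < n \<Longrightarrow> 0 \<le> rh i"
  unfolding rh_def using xv_nonneg by simp

lemma cum_ge2:
  assumes "i < n" "j < n" "i \<noteq> j" "pr rh i j"
  shows "dv i + dv j \<le> cum j"
proof -
  have "dv i + dv j = (\<Sum>k\<in>{i, j}. if pr rh k j \<or> k = j then dv k else 0)"
    using assms by simp
  also have "\<dots> \<le> cum j" unfolding cum_def using assms by (intro sum_mono2) auto
  finally show ?thesis .
qed

lemma cum_mono:
  assumes "pr rh f i"
  shows "cum f \<le> cum i"
  unfolding cum_def
proof (intro sum_mono)
  fix k
  have "pr rh k f \<or> k = f \<Longrightarrow> pr rh k i \<or> k = i" using assms pr_trans[of rh k f i] by blast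
  then show "(if pr rh k f \<or> k = f then dv k else 0) \<le> (if pr rh k i \<or> k = i then dv k else 0)"
    by auto
qed

lemma G_Gs: "(\<Sum>i\<in>G. xv i) \<le> (\<Sum>i\<in>Gs. xv i) + xmax"
proof -
  have fG: "finite G" by (simp add: G_def)
  have sub: "Gs \<subseteq> G" by (auto simp: Gs_def)
  have split: "(\<Sum>i\<in>G. xv i) = (\<Sum>i\<in>Gs. xv i) + (\<Sum>i\<in>G - Gs. xv i)"
    using fG sub by (metis add.commute sum.subset_diff)
  have one: "i = j" if "i \<in> G - Gs" "j \<in> G - Gs" for i j
  proof (rule ccontr)
    assume ne: "i \<noteq> j"
    have h: "i < n" "j < n" "cum i \<le> m" "cum j \<le> m" "m < 2 * dv i" "m < 2 * dv j"
      using that by (auto simp: G_def Gs_def)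
    from pr_total[OF ne, of rh] show False
    proof
      assume "pr rh i j"
      then have "dv i + dv j \<le> cum j" using cum_ge2 h ne by blast
      then show False using h by linarith
    next
      assume "pr rh j i"
      then have "dv j + dv i \<le> cum i" using cum_ge2 h ne by blast
      then show False using h by linarith
    qed
  qed
  have "(\<Sum>i\<in>G - Gs. xv i) \<le> xmax"
  proof (cases "G - Gs = {}")
    case True then show ?thesis using xmax_nonneg by (simp only: True sum.empty)
  next
    case False
    then obtain i where i: "i \<in> G - Gs" by blast
    then have "G - Gs = {i}" using one by blast
    then show ?thesis using i xmax_ge by (auto simp: G_def)
  qed
  then show ?thesis using split by simp
qed

lemma F_bound:
  assumes F: "F \<subseteq> {..<n}" and Fd: "(\<Sum>i\<in>F. dv i) \<le> m"
  shows "(\<Sum>i\<in>F. xv i) \<le> 2 * (\<Sum>i\<in>G. xv i) + xmax"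
proof -
  have fF: "finite F" using F finite_subset by blast
  have fG: "finite G" by (simp add: G_def)
  have Gnn: "0 \<le> (\<Sum>i\<in>G. xv i)" using xv_nonneg by (intro sum_nonneg) (auto simp: G_def)
  show ?thesis
  proof (cases "{..<n} \<subseteq> G")
    case True
    then have "(\<Sum>i\<in>F. xv i) \<le> (\<Sum>i\<in>G. xv i)"
      using F fG xv_nonneg by (intro sum_mono2) (auto simp: G_def)
    then show ?thesis using Gnn xmax_nonneg by simp
  next
    case False
    define NG where "NG = {..<n} - G"
    have "NG \<noteq> {}" using False by (auto simp: NG_def)
    then obtain f where f: "f \<in> NG" "\<forall>j\<in>NG. j \<noteq> f \<longrightarrow> pr rh f j"
      using pr_min[of NG rh] by (auto simp: NG_def)
    have fn: "f < n" "m < cum f" using f(1) by (auto simp: NG_def G_def)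
    have a: "pr rh i f" if "i \<in> G" for i
    proof -
      have "i \<noteq> f" using that f(1) by (auto simp: NG_def)
      moreover have "\<not> pr rh f i"
      proof
        assume "pr rh f i"
        then have "cum f \<le> cum i" by (rule cum_mono)
        then show False using that fn by (auto simp: G_def)
      qed
      ultimately show ?thesis using pr_total by blast
    qed
    have b: "rh i \<le> rh f" if "i < n" "i \<notin> G" for i
    proof (cases "i = f")
      case True then show ?thesis by simp
    next
      case False
      then have "pr rh f i" using f that by (auto simp: NG_def)
      then show ?thesis unfolding pr_def by auto
    qed
    have c: "rh f \<le> rh i" if "i \<in> G" for i using a[OF that] unfolding pr_def by auto
    have d: "cum f = (\<Sum>i\<in>G. dv i) + dv f"
    proof -
      have "cum f = (\<Sum>k\<in>{..<n}. if k \<in> insert f G then dv k else 0)"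
        unfolding cum_def
      proof (intro sum.cong refl)
        fix k assume k: "k \<in> {..<n}"
        have "(pr rh k f \<or> k = f) = (k \<in> insert f G)"
        proof
          assume h: "pr rh k f \<or> k = f"
          show "k \<in> insert f G"
          proof (rule ccontr)
            assume "k \<notin> insert f G"
            then have "k \<in> NG" "k \<noteq> f" using k by (auto simp: NG_def)
            then have "pr rh f k" using f by auto
            then show False using h pr_asym by blast
          qed
        next
          assume "k \<in> insert f G" then show "pr rh k f \<or> k = f" using a by auto
        qed
        then show "(if pr rh k f \<or> k = f then dv k else 0) = (if k \<in> insert f G then dv k else 0)" by simp
      qed
      also have "\<dots> = (\<Sum>k\<in>{k\<in>{..<n}. k \<in> insert f G}. dv k)"
        by (rule sum.inter_filter[symmetric]) simp
      also have "\<dots> = (\<Sum>k\<in>insert f G. dv k)"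
      proof -
        have "{k\<in>{..<n}. k \<in> insert f G} = insert f G" using fn by (auto simp: G_def)
        then show ?thesis by simp
      qed
      also have "\<dots> = (\<Sum>i\<in>G. dv i) + dv f"
        using fG f(1) by (simp add: NG_def)
      finally show ?thesis .
    qed
    have rf: "0 \<le> rh f" using rh_nonneg fn by simp
    have "(\<Sum>i\<in>F - G. xv i) \<le> (\<Sum>i\<in>F - G. rh f * dv i)"
    proof (intro sum_mono)
      fix i assume "i \<in> F - G"
      then have i: "i < n" "i \<notin> G" using F by auto
      show "xv i \<le> rh f * dv i" using xv_eq[OF i(1)] b[OF i] by (simp add: mult_right_mono)
    qed
    also have "\<dots> = rh f * (\<Sum>i\<in>F - G. dv i)" by (simp add: sum_distrib_left)
    also have "\<dots> \<le> rh f * m"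
    proof -
      have "(\<Sum>i\<in>F - G. dv i) \<le> (\<Sum>i\<in>F. dv i)" using fF by (intro sum_mono2) auto
      then have "real (\<Sum>i\<in>F - G. dv i) \<le> real m" using Fd by linarith
      then show ?thesis using rf by (simp add: mult_left_mono)
    qed
    also have "\<dots> \<le> rh f * cum f" using fn rf by (simp add: mult_left_mono)
    also have "\<dots> = (\<Sum>i\<in>G. rh f * dv i) + xv f"
      unfolding d using xv_eq[OF fn(1)] by (simp add: sum_distrib_left distrib_left)
    also have "\<dots> \<le> (\<Sum>i\<in>G. xv i) + xmax"
    proof -
      have "(\<Sum>i\<in>G. rh f * dv i) \<le> (\<Sum>i\<in>G. xv i)"
      proof (intro sum_mono)
        fix i assume i: "i \<in> G"
        then have "i < n" by (simp add: G_def)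
        then show "rh f * dv i \<le> xv i" using xv_eq c[OF i] by (simp add: mult_right_mono)
      qed
      then show ?thesis using xmax_ge[OF fn(1)] by simp
    qed
    finally have FG: "(\<Sum>i\<in>F - G. xv i) \<le> (\<Sum>i\<in>G. xv i) + xmax" .
    have "(\<Sum>i\<in>F. xv i) = (\<Sum>i\<in>F \<inter> G. xv i) + (\<Sum>i\<in>F - G. xv i)"
      using fF by (metis sum.Int_Diff)
    moreover have "(\<Sum>i\<in>F \<inter> G. xv i) \<le> (\<Sum>i\<in>G. xv i)"
      using fG xv_nonneg by (intro sum_mono2) (auto simp: G_def)
    ultimately show ?thesis using FG by simp
  qed
qed

lemma opt_bound: "opt_welfare n m vs \<le> 2 * (\<Sum>i\<in>Gs. xv i) + 3 * xmax"
proof -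
  have "opt_welfare n m vs \<le> 2 * (\<Sum>i\<in>G. xv i) + xmax"
    unfolding opt_welfare_def
  proof (rule cSup_least)
    show "{\<Sum>i<n. vs i (q i) |q. sum q {..<n} \<le> m} \<noteq> {}" proof -
      have "(\<Sum>i<n. vs i ((\<lambda>_. 0::nat) i)) \<in> {\<Sum>i<n. vs i (q i) |q. sum q {..<n} \<le> m}"
        unfolding mem_Collect_eq by (rule exI[of _ "\<lambda>_. 0::nat"]) simp
      then show ?thesis by blast
    qed
  next
    fix s assume "s \<in> {\<Sum>i<n. vs i (q i) |q. sum q {..<n} \<le> m}"
    then obtain q where s: "s = (\<Sum>i<n. vs i (q i))" and q: "sum q {..<n} \<le> m" by blast
    define F where "F = {i \<in> {..<n}. dv i \<le> q i}"
    have "s = (\<Sum>i<n. if dv i \<le> q i then xv i else 0)" unfolding s using vs_val by (intro sum.cong) auto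
    also have "\<dots> = (\<Sum>i\<in>F. xv i)" unfolding F_def by (rule sum.inter_filter[symmetric]) simp
    finally have sF: "s = (\<Sum>i\<in>F. xv i)" .
    have "(\<Sum>i\<in>F. dv i) \<le> (\<Sum>i\<in>F. q i)" by (intro sum_mono) (auto simp: F_def)
    also have "\<dots> \<le> sum q {..<n}" by (intro sum_mono2) (auto simp: F_def)
    finally have "(\<Sum>i\<in>F. dv i) \<le> m" using q by linarith
    then show "s \<le> 2 * (\<Sum>i\<in>G. xv i) + xmax" using F_bound[of F] sF by (auto simp: F_def)
  qed
  then show ?thesis using G_Gs by simp
qed

end

lemma arith_aux:
  fixes o' S X a b :: real
  assumes "o' \<le> 2 * S + 3 * X" "9/100 * X \<le> a" "S / 18 \<le> b" "0 \<le> X" "0 \<le> S"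
  shows "o' \<le> 400 * (1/2 * a + 1/2 * b)"
proof -
  have "18 * X \<le> 200 * a" using assms(2) by linarith
  moreover have "100 / 9 * S \<le> 200 * b" using assms(3) by linarith
  moreover have "400 * (1/2 * a + 1/2 * b) = 200 * a + 200 * b" by simp
  ultimately show ?thesis using assms(1,4,5) by linarith
qed

context Setting begin

lemma combined:
  "opt_welfare n m vs \<le> 400 * ((1/2) * measure_pmf.expectation (CC {..<n}) (\<lambda>c. \<Sum>i<n. vs i (fst (out1 n m c (tr m n vs)) i))
     + (1/2) * measure_pmf.expectation (CC {..<n}) (\<lambda>c. \<Sum>i<n. vs i (fst (out2 n m c (tr m n vs)) i)))"
proof -
  have S0: "0 \<le> (\<Sum>i\<in>Gs. xv i)" using xv_nonneg by (intro sum_nonneg) (auto simp: Gs_def G_def)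
  show ?thesis by (rule arith_aux[OF opt_bound W1_bound W2_bound xmax_nonneg S0])
qed

end

theorem theorem3p2:
  fixes n m :: nat
  shows "\<exists>D :: (msg mech \<times> (nat \<Rightarrow> msg strategy)) pmf.
     (\<forall>(T, S) \<in> set_pmf D. det_mech n m T S \<and> OSP n m T S) \<and>
     (\<forall>vs. (\<forall>i<n. single_minded m (vs i)) \<longrightarrow>
        opt_welfare n m vs \<le> 400 * measure_pmf.expectation D (\<lambda>(T, S). welfare n T S vs))"
proof -
  define g where "g = (\<lambda>(b, c). (if b then mech1 n m c else mech2 n m c, strat m))"
  define D where "D = map_pmf g (pair_pmf (bernoulli_pmf (1/2)) (CC {..<n}))"
  have P1: "\<forall>(T, S) \<in> set_pmf D. det_mech n m T S \<and> OSP n m T S"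
    unfolding D_def g_def using mech1_ok mech2_ok by auto
  have P2: "opt_welfare n m vs \<le> 400 * measure_pmf.expectation D (\<lambda>(T, S). welfare n T S vs)"
    if sm: "\<forall>i<n. single_minded m (vs i)" for vs
  proof (cases "n = 0")
    case True
    have "{\<Sum>i<n. vs i (q i) |q. sum q {..<n} \<le> m} = {0}" using True by auto
    then have "opt_welfare n m vs = 0" unfolding opt_welfare_def by simp
    moreover have "measure_pmf.expectation D (\<lambda>(T, S). welfare n T S vs) = 0"
    proof -
      have "(\<lambda>(T, S). welfare n T S vs) = (\<lambda>_::(msg mech \<times> (nat \<Rightarrow> msg strategy)). 0::real)"
        using True by (auto simp: welfare_def)
      then show ?thesis by (simp del: split_paired_all)
    qed
    ultimately show ?thesis by simp
  next
    case False
    then have st: "Setting n m vs" using sm by unfold_locales auto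
    have fb: "finite (set_pmf (bernoulli_pmf (1/2)))" by (rule finite_subset[of _ UNIV]) auto
    have fc: "finite (set_pmf (CC {..<n}))" by (simp add: finite_set_CC)
    have "measure_pmf.expectation D (\<lambda>(T, S). welfare n T S vs) =
          measure_pmf.expectation (bernoulli_pmf (1/2)) (\<lambda>b. measure_pmf.expectation (CC {..<n})
             (\<lambda>c. welfare n (if b then mech1 n m c else mech2 n m c) (strat m) vs))"
      unfolding D_def integral_map_pmf using fb fc by (subst exp_pair_fin) (auto simp: g_def)
    also have "\<dots> = (1/2) * measure_pmf.expectation (CC {..<n}) (\<lambda>c. \<Sum>i<n. vs i (fst (out1 n m c (tr m n vs)) i))
     + (1/2) * measure_pmf.expectation (CC {..<n}) (\<lambda>c. \<Sum>i<n. vs i (fst (out2 n m c (tr m n vs)) i))"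
      by (simp add: welfare1 welfare2)
    finally show ?thesis using Setting.combined[OF st] by simp
  qed
  show ?thesis using P1 P2 by blast
qed

end
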